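(* Consider problem $\mathbf{P4}$ (defined in the context) with $E_{max}>0$. Let $A_1=\sum_{i=1}^M\gamma_i$, $A_2=\sum_{j=1}^N\theta_j$, $a=\sum_{i=1}^M\eta_iP_Bh_{1,i}$, $f(x)=x\ln x-x+1$, let $x^*>1$ solve $f(x^* )=A_1$ and, when $A_1\ge \frac{a}{N}A_2$, let $x_1^*>1$ solve $f(x_1^* )=A_1-\frac aNA_2$. Write $L=\frac{a(x_1^*-1)}{A_1+x_1^*-1}$, $U=\frac{N}{A_2}(x_1^*-1)$, $D=N(x_1^*-1+A_1)-aA_2$. Then an optimal solution of $\mathbf{P4}$ is, for $i=1,\dots,M$, $j=1,\dots,N$: (i) if $A_1\ge\frac aNA_2$ and $E_{max}\le L$: $\tau_0^*=\min\left[\frac{x^*-1}{A_1+x^*-1},\frac{E_{max}}{a}\right]$, $\tau_{1,i}^*=\max\left[\frac{\gamma_i}{A_1+x^*-1},\frac{\gamma_i}{A_1}\left(1-\frac{E_{max}}{a}\right)\right]$, $\tau_{2,j}^*=0$, $\bar E^*=0$; (ii) if $A_1\ge\frac aNA_2$ and $L\le E_{max}\le U$: $\tau_0^*=\frac{N(x_1^*-1)-E_{max}A_2}{D}$, $\tau_{1,i}^*=\frac{\gamma_i\left(N(x_1^*-1)-E_{max}A_2\right)}{(x_1^*-1)D}$, $\tau_{2,j}^*=\frac{\theta_j\left(E_{max}(x_1^*-1+A_1)-a(x_1^*-1)\right)}{(x_1^*-1)D}$, $\bar E^*=\frac{E_{max}(x_1^*-1+A_1)-a(x_1^*-1)}{D}$;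 (iii) if ($A_1\ge\frac aNA_2$ and $E_{max}\ge U$) or $A_1<\frac aNA_2$: $\tau_0^*=0$, $\tau_{1,i}^*=0$, $\tau_{2,j}^*=\theta_j/A_2$, $\bar E^*=E_{max}/N$.
   Context: Integers $M,N\ge 1$; positive constants $P_B$, $\Gamma$, $\sigma^2$, $E_{max}$; for $i=1,\dots,M$ constants $\eta_i\in(0,1)$, $h_{1,i}>0$, $g_{1,i}>0$; for $j=1,\dots,N$ constants $g_{2,j}>0$. Define $\gamma_i=\eta_ih_{1,i}g_{1,i}P_B/(\Gamma\sigma^2)$ and $\theta_j=g_{2,j}/(\Gamma\sigma^2)$. For $\tau>0$ let $R_{1,i}(\tau_0,\tau)=\tau\log_2(1+\gamma_i\tau_0/\tau)$ and $R_{2,j}(\bar E,\tau)=\tau\log_2(1+\theta_j\bar E/\tau)$, with both set to $0$ when $\tau=0$. Problem $\mathbf{P4}$: maximize $\sum_{i=1}^MR_{1,i}(\tau_0,\tau_{1,i})+\sum_{j=1}^NR_{2,j}(\bar E,\tau_{2,j})$ over $\tau_0,\tau_{1,1},\dots,\tau_{1,M},\tau_{2,1},\dots,\tau_{2,N}\ge0$ and $\bar E\ge 0$, subject to $\tau_0+\sum_{i=1}^M\tau_{1,i}+\sum_{j=1}^N\tau_{2,j}\le 1$ and $a\tau_0+N\bar E\le E_{max}$, where $a=\sum_{i=1}^M\eta_iP_Bh_{1,i}$. *)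

theory Defs
  imports Complex_Main
begin

definition rate :: "real \<Rightarrow> real \<Rightarrow> real \<Rightarrow> real" where
  "rate c e t = (if t = 0 then 0 else t * log 2 (1 + c * e / t))"

definition P4_obj ::
  "nat \<Rightarrow> nat \<Rightarrow> (nat \<Rightarrow> real) \<Rightarrow> (nat \<Rightarrow> real) \<Rightarrow>
   real \<Rightarrow> (nat \<Rightarrow> real) \<Rightarrow> (nat \<Rightarrow> real) \<Rightarrow> real \<Rightarrow> real" where
  "P4_obj M N gamma theta t0 t1 t2 E =
     (\<Sum>i=1..M. rate (gamma i) t0 (t1 i)) + (\<Sum>j=1..N. rate (theta j) E (t2 j))"

definition P4_feasible ::
  "nat \<Rightarrow> nat \<Rightarrow> real \<Rightarrow> real \<Rightarrow>
   real \<Rightarrow> (nat \<Rightarrow> real) \<Rightarrow> (nat \<Rightarrow> real) \<Rightarrow> real \<Rightarrow> bool" where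
  "P4_feasible M N a Emax t0 t1 t2 E \<longleftrightarrow>
     t0 \<ge> 0 \<and> (\<forall>i\<in>{1..M}. t1 i \<ge> 0) \<and> (\<forall>j\<in>{1..N}. t2 j \<ge> 0) \<and> E \<ge> 0 \<and>
     t0 + (\<Sum>i=1..M. t1 i) + (\<Sum>j=1..N. t2 j) \<le> 1 \<and>
     a * t0 + real N * E \<le> Emax"

definition P4_optimal ::
  "nat \<Rightarrow> nat \<Rightarrow> (nat \<Rightarrow> real) \<Rightarrow> (nat \<Rightarrow> real) \<Rightarrow> real \<Rightarrow> real \<Rightarrow>
   real \<Rightarrow> (nat \<Rightarrow> real) \<Rightarrow> (nat \<Rightarrow> real) \<Rightarrow> real \<Rightarrow> bool" where
  "P4_optimal M N gamma theta a Emax t0 t1 t2 E \<longleftrightarrow>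
     P4_feasible M N a Emax t0 t1 t2 E \<and>
     (\<forall>s0 s1 s2 F. P4_feasible M N a Emax s0 s1 s2 F \<longrightarrow>
        P4_obj M N gamma theta s0 s1 s2 F \<le> P4_obj M N gamma theta t0 t1 t2 E)"

definition fP4 :: "real \<Rightarrow> real" where
  "fP4 x = x * ln x - x + 1"

end

theory Submission
  imports Defs
begin


lemma f_nonneg: assumes "x > 0" shows "fP4 x \<ge> 0"
proof -
  have "ln (1/x) \<le> 1/x - 1" using assms by (intro ln_le_minus_one) simp
  hence "- ln x \<le> 1/x - 1" using assms by (simp add: ln_div)
  hence "x * (- ln x) \<le> x * (1/x - 1)" using assms by (intro mult_left_mono) auto
  moreover have "x * (1/x - 1) = 1 - x" using assms by (simp add: algebra_simps)
  ultimately show ?thesis by (simp add: fP4_def)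
qed

lemma f_mono: assumes "1 \<le> y" "y \<le> z" shows "fP4 y \<le> fP4 z"
proof -
  have "ln (y/z) \<le> y/z - 1" using assms by (intro ln_le_minus_one) simp
  hence "ln y - ln z \<le> y/z - 1" using assms by (simp add: ln_div)
  hence "z * (ln z - ln y) \<ge> z * (1 - y/z)" using assms by (intro mult_left_mono) auto
  moreover have "z * (1 - y/z) = z - y" using assms by (simp add: algebra_simps)
  ultimately have h1: "z * (ln z - ln y) \<ge> z - y" by simp
  have "(z - y) * ln y \<ge> 0" using assms by simp
  thus ?thesis using h1 by (simp add: fP4_def algebra_simps)
qed

lemma rate_le:
  assumes "c > 0" "e \<ge> 0" "t \<ge> 0" "x > 0"
  shows "rate c e t \<le> (t * fP4 x / x + c * e / x) / ln 2"
proof (cases "t = 0")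
  case True
  thus ?thesis using assms by (simp add: rate_def)
next
  case False
  hence t: "t > 0" using assms by simp
  define z where "z = 1 + c * e / t"
  have z: "z \<ge> 1" using assms t by (simp add: z_def)
  have "ln (z/x) \<le> z/x - 1" using z assms by (intro ln_le_minus_one) simp
  hence "ln z \<le> z/x - 1 + ln x" using z assms by (simp add: ln_div)
  hence "t * ln z \<le> t * (z/x - 1 + ln x)" using t by (intro mult_left_mono) auto
  also have "\<dots> = t * fP4 x / x + c * e / x" using t assms
    by (simp add: z_def fP4_def field_simps)
  finally have "t * ln z \<le> t * fP4 x / x + c * e / x" .
  hence "t * ln z / ln 2 \<le> (t * fP4 x / x + c * e / x) / ln 2"
    by (intro divide_right_mono) auto
  thus ?thesis using False by (simp add: rate_def log_def z_def)
qed

lemma rate_eq: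
  assumes "c > 0" "t \<ge> 0" "x > 0" "c * e = (x - 1) * t"
  shows "rate c e t = (t * fP4 x / x + c * e / x) / ln 2"
proof (cases "t = 0")
  case True
  thus ?thesis using assms by (simp add: rate_def)
next
  case False
  hence t: "t > 0" using assms by simp
  have "1 + c * e / t = x" using assms t by (simp add: field_simps)
  hence "rate c e t = t * ln x / ln 2" using False by (simp add: rate_def log_def)
  also have "t * ln x = t * fP4 x / x + c * e / x" using assms t
    by (simp add: fP4_def field_simps)
  finally show ?thesis .
qed

lemma grp_le:
  assumes "\<forall>i\<in>{1..n}. c i > 0 \<and> s i \<ge> 0" "e \<ge> 0" "x > 0"
  shows "(\<Sum>i=1..n. rate (c i) e (s i)) \<le>
     (fP4 x / x * (\<Sum>i=1..n. s i) + (\<Sum>i=1..n. c i) * e / x) / ln 2"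
proof -
  have "(\<Sum>i=1..n. rate (c i) e (s i)) \<le> (\<Sum>i=1..n. (s i * fP4 x / x + c i * e / x) / ln 2)"
    using assms by (intro sum_mono rate_le) auto
  also have "\<dots> = (fP4 x / x * (\<Sum>i=1..n. s i) + (\<Sum>i=1..n. c i) * e / x) / ln 2"
    by (simp add: sum_divide_distrib[symmetric] sum.distrib sum_distrib_left sum_distrib_right
        mult.commute mult.left_commute)
  finally show ?thesis .
qed

lemma grp_eq:
  assumes "\<forall>i\<in>{1..n}. c i > 0 \<and> s i \<ge> 0 \<and> c i * e = (x - 1) * s i" "x > 0"
  shows "(\<Sum>i=1..n. rate (c i) e (s i)) =
     (fP4 x / x * (\<Sum>i=1..n. s i) + (\<Sum>i=1..n. c i) * e / x) / ln 2"
proof -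
  have "(\<Sum>i=1..n. rate (c i) e (s i)) = (\<Sum>i=1..n. (s i * fP4 x / x + c i * e / x) / ln 2)"
    using assms by (intro sum.cong rate_eq) auto
  also have "\<dots> = (fP4 x / x * (\<Sum>i=1..n. s i) + (\<Sum>i=1..n. c i) * e / x) / ln 2"
    by (simp add: sum_divide_distrib[symmetric] sum.distrib sum_distrib_left sum_distrib_right
        mult.commute mult.left_commute)
  finally show ?thesis .
qed

lemma kkt:
  fixes gamma theta :: "nat \<Rightarrow> real" and t1 t2 :: "nat \<Rightarrow> real"
  assumes gpos: "\<forall>i\<in>{1..M}. gamma i > 0" and tpos: "\<forall>j\<in>{1..N}. theta j > 0"
   and x: "x > 0" and mu: "mu \<ge> 0"
   and d1: "(\<Sum>i=1..M. gamma i)/x \<le> fP4 x/x + a*mu"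
   and d2: "(\<Sum>j=1..N. theta j)/x \<le> real N * mu"
   and feas: "P4_feasible M N a Emax t0 t1 t2 E"
   and cs1: "(fP4 x/x + a*mu - (\<Sum>i=1..M. gamma i)/x) * t0 = 0"
   and cs2: "(real N*mu - (\<Sum>j=1..N. theta j)/x) * E = 0"
   and tight: "t0 + (\<Sum>i=1..M. t1 i) + (\<Sum>j=1..N. t2 j) = 1"
   and cs3: "a*t0 + real N*E = Emax"
   and eq1: "\<forall>i\<in>{1..M}. gamma i * t0 = (x-1)*t1 i"
   and eq2: "\<forall>j\<in>{1..N}. theta j * E = (x-1)*t2 j"
  shows "P4_optimal M N gamma theta a Emax t0 t1 t2 E"
proof -
  define lam where "lam = fP4 x / x"
  have lam: "lam \<ge> 0" using f_nonneg[OF x] x by (simp add: lam_def)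
  have l2: "ln (2::real) > 0" by simp
  have "P4_obj M N gamma theta t0 t1 t2 E =
     (lam * (\<Sum>i=1..M. t1 i) + (\<Sum>i=1..M. gamma i) * t0 / x) / ln 2
     + (lam * (\<Sum>j=1..N. t2 j) + (\<Sum>j=1..N. theta j) * E / x) / ln 2"
    unfolding P4_obj_def lam_def
    using feas gpos tpos eq1 eq2 x
    by (intro arg_cong2[where f="(+)"] grp_eq) (auto simp: P4_feasible_def)
  also have "\<dots> = (lam + mu * Emax) / ln 2"
  proof -
    have "(\<Sum>i=1..M. gamma i) * t0 / x = (lam + a*mu) * t0" using cs1
      by (simp add: lam_def algebra_simps)
    moreover have "(\<Sum>j=1..N. theta j) * E / x = real N * mu * E" using cs2
      by (simp add: algebra_simps)
    moreover have "lam * (t0 + (\<Sum>i=1..M. t1 i) + (\<Sum>j=1..N. t2 j)) = lam" using tight by simp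
    moreover have "mu * (a*t0 + real N*E) = mu * Emax" using cs3 by simp
    ultimately have "lam * (\<Sum>i=1..M. t1 i) + (\<Sum>i=1..M. gamma i) * t0 / x
     + (lam * (\<Sum>j=1..N. t2 j) + (\<Sum>j=1..N. theta j) * E / x) = lam + mu * Emax"
      by (simp only: algebra_simps)
    thus ?thesis by (simp add: add_divide_distrib[symmetric])
  qed
  finally have val: "P4_obj M N gamma theta t0 t1 t2 E = (lam + mu * Emax) / ln 2" .
  show ?thesis unfolding P4_optimal_def
  proof (intro conjI allI impI)
    show "P4_feasible M N a Emax t0 t1 t2 E" by (rule feas)
    fix s0 s1 s2 F assume fs: "P4_feasible M N a Emax s0 s1 s2 F"
    have "P4_obj M N gamma theta s0 s1 s2 F \<le>
     (lam * (\<Sum>i=1..M. s1 i) + (\<Sum>i=1..M. gamma i) * s0 / x) / ln 2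
     + (lam * (\<Sum>j=1..N. s2 j) + (\<Sum>j=1..N. theta j) * F / x) / ln 2"
      unfolding P4_obj_def lam_def
      using fs gpos tpos x
      by (intro add_mono grp_le) (auto simp: P4_feasible_def)
    also have "\<dots> \<le> (lam + mu * Emax) / ln 2"
    proof -
      have s0: "s0 \<ge> 0" "F \<ge> 0" and sm: "s0 + (\<Sum>i=1..M. s1 i) + (\<Sum>j=1..N. s2 j) \<le> 1"
        and en: "a*s0 + real N*F \<le> Emax" using fs by (auto simp: P4_feasible_def)
      have "(\<Sum>i=1..M. gamma i) * s0 / x \<le> (lam + a*mu) * s0"
        using mult_right_mono[OF d1 s0(1)] by (simp add: lam_def)
      moreover have "(\<Sum>j=1..N. theta j) * F / x \<le> real N * mu * F"
        using mult_right_mono[OF d2 s0(2)] by simp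
      moreover have "lam * (s0 + (\<Sum>i=1..M. s1 i) + (\<Sum>j=1..N. s2 j)) \<le> lam"
        using mult_left_mono[OF sm lam] by simp
      moreover have "mu * (a*s0 + real N*F) \<le> mu * Emax"
        using mult_left_mono[OF en mu] by simp
      ultimately have "lam * (\<Sum>i=1..M. s1 i) + (\<Sum>i=1..M. gamma i) * s0 / x
        + (lam * (\<Sum>j=1..N. s2 j) + (\<Sum>j=1..N. theta j) * F / x) \<le> lam + mu * Emax"
        by (simp only: algebra_simps)
      thus ?thesis using l2 by (simp add: add_divide_distrib[symmetric] divide_right_mono)
    qed
    finally show "P4_obj M N gamma theta s0 s1 s2 F \<le> P4_obj M N gamma theta t0 t1 t2 E"
      using val by simp
  qed
qed


lemma P4_optimal_cong1:
  assumes "\<forall>i\<in>{1..M}. t1 i = t1' i"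
  shows "P4_optimal M N gamma theta a Emax t0 t1 t2 E = P4_optimal M N gamma theta a Emax t0 t1' t2 E"
proof -
  have "(\<Sum>i=1..M. t1 i) = (\<Sum>i=1..M. t1' i)" using assms by (intro sum.cong) auto
  moreover have "(\<Sum>i=1..M. rate (gamma i) t0 (t1 i)) = (\<Sum>i=1..M. rate (gamma i) t0 (t1' i))"
    using assms by (intro sum.cong) auto
  ultimately show ?thesis using assms
    unfolding P4_optimal_def P4_feasible_def P4_obj_def by auto
qed

theorem theorem4:
  fixes M N :: nat
    and PB Gam sig2 Emax :: real
    and eta h1 g1 g2 :: "nat \<Rightarrow> real"
    and xs x1 :: real
  assumes "M \<ge> 1" and "N \<ge> 1"
    and "PB > 0" and "Gam > 0" and "sig2 > 0" and "Emax > 0"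
    and "\<forall>i\<in>{1..M}. 0 < eta i \<and> eta i < 1 \<and> h1 i > 0 \<and> g1 i > 0"
    and "\<forall>j\<in>{1..N}. g2 j > 0"
  defines "gamma \<equiv> (\<lambda>i. eta i * h1 i * g1 i * PB / (Gam * sig2))"
    and "theta \<equiv> (\<lambda>j. g2 j / (Gam * sig2))"
    and "a \<equiv> (\<Sum>i=1..M. eta i * PB * h1 i)"
  defines "A1 \<equiv> (\<Sum>i=1..M. gamma i)"
    and "A2 \<equiv> (\<Sum>j=1..N. theta j)"
  defines "L \<equiv> a * (x1 - 1) / (A1 + x1 - 1)"
    and "U \<equiv> real N / A2 * (x1 - 1)"
    and "D \<equiv> real N * (x1 - 1 + A1) - a * A2"
  assumes xs: "xs > 1" "fP4 xs = A1"
  shows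
    "(A1 \<ge> a / real N * A2 \<and> x1 > 1 \<and> fP4 x1 = A1 - a / real N * A2 \<and> Emax \<le> L \<longrightarrow>
       P4_optimal M N gamma theta a Emax
         (min ((xs - 1) / (A1 + xs - 1)) (Emax / a))
         (\<lambda>i. max (gamma i / (A1 + xs - 1)) (gamma i / A1 * (1 - Emax / a)))
         (\<lambda>j. 0) 0)
   \<and> (A1 \<ge> a / real N * A2 \<and> x1 > 1 \<and> fP4 x1 = A1 - a / real N * A2 \<and>
        L \<le> Emax \<and> Emax \<le> U \<longrightarrow>
       P4_optimal M N gamma theta a Emax
         ((real N * (x1 - 1) - Emax * A2) / D)
         (\<lambda>i. gamma i * (real N * (x1 - 1) - Emax * A2) / ((x1 - 1) * D))
         (\<lambda>j. theta j * (Emax * (x1 - 1 + A1) - a * (x1 - 1)) / ((x1 - 1) * D))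
         ((Emax * (x1 - 1 + A1) - a * (x1 - 1)) / D))
   \<and> ((A1 \<ge> a / real N * A2 \<and> x1 > 1 \<and> fP4 x1 = A1 - a / real N * A2 \<and> Emax \<ge> U)
        \<or> A1 < a / real N * A2 \<longrightarrow>
       P4_optimal M N gamma theta a Emax 0 (\<lambda>i. 0) (\<lambda>j. theta j / A2) (Emax / real N))"
  proof -
  have gpos: "\<forall>i\<in>{1..M}. gamma i > 0" using assms(3-7) by (auto simp: gamma_def)
  have tpos: "\<forall>j\<in>{1..N}. theta j > 0" using assms(4,5,8) by (auto simp: theta_def)
  have apos: "a > 0" unfolding a_def using assms(1,3,7) by (intro sum_pos) auto
  have A1pos: "A1 > 0" unfolding A1_def using assms(1) gpos by (intro sum_pos) auto
  have A2pos: "A2 > 0" unfolding A2_def using assms(2) tpos by (intro sum_pos) auto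
  have Npos: "real N > 0" using assms(2) by simp
  have sg: "(\<Sum>i=1..M. gamma i) = A1" by (simp add: A1_def)
  have st: "(\<Sum>j=1..N. theta j) = A2" by (simp add: A2_def)
  have E: "Emax > 0" by fact
  have c0: "a / real N * A2 > 0" using apos A2pos Npos by simp
  show ?thesis
  proof (intro conjI impI)
    assume h: "A1 \<ge> a / real N * A2 \<and> x1 > 1 \<and> fP4 x1 = A1 - a / real N * A2 \<and> Emax \<le> L"
    have x1: "x1 > 1" and fx1: "fP4 x1 = A1 - a / real N * A2" and EL: "Emax \<le> L" using h by auto
    have x1xs: "x1 < xs"
    proof (rule ccontr)
      assume "\<not> x1 < xs"
      hence "fP4 xs \<le> fP4 x1" using xs by (intro f_mono) auto
      thus False using fx1 xs c0 by simp
    qed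
    define t0 where "t0 = Emax / a"
    have t0pos: "t0 > 0" using E apos by (simp add: t0_def)
    have "Emax * (A1 + x1 - 1) \<le> a * (x1 - 1)"
      using EL A1pos x1 by (simp add: L_def divide_simps)
    hence t0x1: "t0 * (A1 + x1 - 1) \<le> x1 - 1" using apos
      by (simp add: t0_def divide_simps mult.commute)
    have t0lt: "t0 < 1"
    proof (rule ccontr)
      assume "\<not> t0 < 1"
      hence "1 * (A1 + x1 - 1) \<le> t0 * (A1 + x1 - 1)" using A1pos x1
        by (intro mult_right_mono) auto
      thus False using t0x1 A1pos by simp
    qed
    have "(x1 - 1) * (A1 + xs - 1) \<le> (xs - 1) * (A1 + x1 - 1)"
      using x1xs A1pos by (simp add: algebra_simps)
    hence "t0 * (A1 + xs - 1) \<le> xs - 1"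
    proof -
      assume hh: "(x1 - 1) * (A1 + xs - 1) \<le> (xs - 1) * (A1 + x1 - 1)"
      have "t0 * (A1 + x1 - 1) * (A1 + xs - 1) \<le> (x1 - 1) * (A1 + xs - 1)"
        using t0x1 A1pos xs by (intro mult_right_mono) auto
      also note hh
      finally have "(t0 * (A1 + xs - 1)) * (A1 + x1 - 1) \<le> (xs - 1) * (A1 + x1 - 1)"
        by (simp add: algebra_simps)
      thus ?thesis using A1pos x1 by (simp add: mult_le_cancel_right)
    qed
    hence mn: "min ((xs - 1) / (A1 + xs - 1)) (Emax / a) = t0"
      using A1pos xs by (simp add: t0_def[symmetric] min_def divide_simps)
    have mx: "\<forall>i\<in>{1..M}. max (gamma i / (A1 + xs - 1)) (gamma i / A1 * (1 - Emax / a))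
       = gamma i / A1 * (1 - t0)"
    proof
      fix i assume i: "i \<in> {1..M}"
      have g: "gamma i > 0" using gpos i by auto
      have "1 - t0 \<ge> A1 / (A1 + xs - 1)"
        using \<open>t0 * (A1 + xs - 1) \<le> xs - 1\<close> A1pos xs by (simp add: divide_simps algebra_simps)
      hence "gamma i / A1 * (1 - t0) \<ge> gamma i / A1 * (A1 / (A1 + xs - 1))"
        using A1pos g by (intro mult_left_mono) auto
      moreover have "gamma i / A1 * (A1 / (A1 + xs - 1)) = gamma i / (A1 + xs - 1)"
        using A1pos by simp
      ultimately show "max (gamma i / (A1 + xs - 1)) (gamma i / A1 * (1 - Emax / a))
        = gamma i / A1 * (1 - t0)"
        unfolding t0_def[symmetric] by (simp only: max_def) auto
    qed
    define y where "y = 1 + A1 * t0 / (1 - t0)"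
    have y1: "y > 1" using A1pos t0pos t0lt by (simp add: y_def)
    have yx1: "y \<le> x1"
    proof -
      have "A1 * t0 \<le> (x1 - 1) * (1 - t0)" using t0x1 by (simp add: algebra_simps)
      hence "A1 * t0 / (1 - t0) \<le> x1 - 1" using t0lt by (simp add: divide_simps)
      thus ?thesis by (simp add: y_def)
    qed
    have fy: "fP4 y \<le> A1 - a / real N * A2" using f_mono[of y x1] y1 yx1 fx1 by simp
    define mu where "mu = (A1 - fP4 y) / (a * y)"
    have mu: "mu \<ge> 0" using fy c0 apos y1 by (simp add: mu_def)
    have amu: "a * mu = (A1 - fP4 y) / y" using apos by (simp add: mu_def)
    show "P4_optimal M N gamma theta a Emax
         (min ((xs - 1) / (A1 + xs - 1)) (Emax / a))
         (\<lambda>i. max (gamma i / (A1 + xs - 1)) (gamma i / A1 * (1 - Emax / a)))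
         (\<lambda>j. 0) 0"
      unfolding mn P4_optimal_cong1[OF mx]
    proof (rule kkt[where x=y and mu=mu], unfold sg st)
      show "\<forall>i\<in>{1..M}. gamma i > 0" by fact
      show "\<forall>j\<in>{1..N}. theta j > 0" by fact
      show "y > 0" using y1 by simp
      show "mu \<ge> 0" by fact
      show "A1 / y \<le> fP4 y / y + a * mu" using y1 by (simp add: amu diff_divide_distrib)
      show "A2 / y \<le> real N * mu"
      proof -
        have "a * A2 \<le> real N * (A1 - fP4 y)" using fy Npos
          by (simp add: field_simps)
        hence "a * A2 / (a * y) \<le> real N * (A1 - fP4 y) / (a * y)"
          using apos y1 by (intro divide_right_mono) auto
        thus ?thesis using apos by (simp add: mu_def)
      qed
      have sumt1: "(\<Sum>i=1..M. gamma i / A1 * (1 - t0)) = 1 - t0"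
      proof -
        have "(\<Sum>i=1..M. gamma i / A1 * (1 - t0)) = (\<Sum>i=1..M. gamma i) / A1 * (1 - t0)"
          by (simp add: sum_distrib_right sum_divide_distrib)
        also have "\<dots> = 1 - t0" unfolding sg using A1pos by simp
        finally show ?thesis .
      qed
      show "P4_feasible M N a Emax t0 (\<lambda>i. gamma i / A1 * (1 - t0)) (\<lambda>j. 0) 0"
        using t0pos t0lt gpos A1pos apos sumt1
        by (auto simp: P4_feasible_def t0_def)
      show "(fP4 y / y + a * mu - A1 / y) * t0 = 0" using y1 by (simp add: amu diff_divide_distrib)
      show "(real N * mu - A2 / y) * 0 = 0" by simp
      show "t0 + (\<Sum>i=1..M. gamma i / A1 * (1 - t0)) + (\<Sum>j=1..N. 0) = 1" using sumt1 by simp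
      show "a * t0 + real N * 0 = Emax" using apos by (simp add: t0_def)
      show "\<forall>i\<in>{1..M}. gamma i * t0 = (y - 1) * (gamma i / A1 * (1 - t0))"
        using A1pos t0lt by (simp add: y_def field_simps)
      show "\<forall>j\<in>{1..N}. theta j * 0 = (y - 1) * 0" by simp
    qed
  next
    assume h: "A1 \<ge> a / real N * A2 \<and> x1 > 1 \<and> fP4 x1 = A1 - a / real N * A2 \<and>
        L \<le> Emax \<and> Emax \<le> U"
    have x1: "x1 > 1" and fx1: "fP4 x1 = A1 - a / real N * A2" and LE: "L \<le> Emax"
      and EU: "Emax \<le> U" and A1a: "A1 \<ge> a / real N * A2" using h by auto
    have Dpos: "D > 0"
    proof -
      have "real N * A1 \<ge> a * A2" using A1a Npos by (simp add: field_simps)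
      moreover have "real N * (x1 - 1) > 0" using Npos x1 by simp
      ultimately show ?thesis by (simp add: D_def algebra_simps)
    qed
    define P where "P = real N * (x1 - 1) - Emax * A2"
    define Q where "Q = Emax * (x1 - 1 + A1) - a * (x1 - 1)"
    have P: "P \<ge> 0" using EU A2pos by (simp add: P_def U_def field_simps)
    have Q: "Q \<ge> 0" using LE A1pos x1 by (simp add: Q_def L_def field_simps)
    define mu where "mu = A2 / (real N * x1)"
    have mu: "mu \<ge> 0" using A2pos Npos x1 by (simp add: mu_def)
    have sg1: "(\<Sum>i=1..M. gamma i * P / ((x1 - 1) * D)) = A1 * P / ((x1 - 1) * D)"
      unfolding sg[symmetric] by (simp add: sum_divide_distrib sum_distrib_right)
    have st1: "(\<Sum>j=1..N. theta j * Q / ((x1 - 1) * D)) = A2 * Q / ((x1 - 1) * D)"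
      unfolding st[symmetric] by (simp add: sum_divide_distrib sum_distrib_right)
    have tightx: "P / D + A1 * P / ((x1 - 1) * D) + A2 * Q / ((x1 - 1) * D) = 1"
    proof -
      have num: "P*(x1-1) + A1*P + A2*Q = (x1-1)*D" by (simp add: P_def Q_def D_def algebra_simps)
      have nz: "(x1 - 1) * D \<noteq> 0" using Dpos x1 by simp
      have "P / D = P*(x1-1) / ((x1-1)*D)" using x1 Dpos by simp
      hence "P / D + A1 * P / ((x1 - 1) * D) + A2 * Q / ((x1 - 1) * D)
          = (P*(x1-1) + A1*P + A2*Q) / ((x1-1)*D)" by (simp add: add_divide_distrib)
      thus ?thesis using num nz by simp
    qed
    have enx: "a * (P / D) + real N * (Q / D) = Emax"
    proof -
      have num: "a*P + real N*Q = Emax*D" by (simp add: P_def Q_def D_def algebra_simps)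
      have "a * (P / D) + real N * (Q / D) = (a*P + real N*Q) / D" by (simp add: add_divide_distrib)
      thus ?thesis using num Dpos by simp
    qed
    show "P4_optimal M N gamma theta a Emax
         ((real N * (x1 - 1) - Emax * A2) / D)
         (\<lambda>i. gamma i * (real N * (x1 - 1) - Emax * A2) / ((x1 - 1) * D))
         (\<lambda>j. theta j * (Emax * (x1 - 1 + A1) - a * (x1 - 1)) / ((x1 - 1) * D))
         ((Emax * (x1 - 1 + A1) - a * (x1 - 1)) / D)"
      unfolding P_def[symmetric] Q_def[symmetric]
    proof (rule kkt[where x=x1 and mu=mu], unfold sg st)
      show "\<forall>i\<in>{1..M}. gamma i > 0" by fact
      show "\<forall>j\<in>{1..N}. theta j > 0" by fact
      show "x1 > 0" using x1 by simp
      show "mu \<ge> 0" by fact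
      have e1: "fP4 x1 / x1 + a * mu = A1 / x1" using x1 Npos
        by (simp add: fx1 mu_def field_simps)
      have e2: "real N * mu = A2 / x1" using x1 Npos by (simp add: mu_def)
      show "A1 / x1 \<le> fP4 x1 / x1 + a * mu" using e1 by simp
      show "A2 / x1 \<le> real N * mu" using e2 by simp
      show "(fP4 x1 / x1 + a * mu - A1 / x1) * (P / D) = 0" using e1 by simp
      show "(real N * mu - A2 / x1) * (Q / D) = 0" using e2 by simp
      show "P / D + (\<Sum>i=1..M. gamma i * P / ((x1 - 1) * D)) +
          (\<Sum>j=1..N. theta j * Q / ((x1 - 1) * D)) = 1" using sg1 st1 tightx by simp
      show "a * (P / D) + real N * (Q / D) = Emax" by (rule enx)
      show "\<forall>i\<in>{1..M}. gamma i * (P / D) = (x1 - 1) * (gamma i * P / ((x1 - 1) * D))"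
        using x1 by simp
      show "\<forall>j\<in>{1..N}. theta j * (Q / D) = (x1 - 1) * (theta j * Q / ((x1 - 1) * D))"
        using x1 by simp
      have "A1 * P / ((x1 - 1) * D) \<ge> 0" using A1pos P x1 Dpos by simp
      show "P4_feasible M N a Emax (P / D) (\<lambda>i. gamma i * P / ((x1 - 1) * D))
          (\<lambda>j. theta j * Q / ((x1 - 1) * D)) (Q / D)"
        unfolding P4_feasible_def using P Q Dpos x1 gpos tpos sg1 st1 tightx enx
        by (auto intro!: divide_nonneg_pos mult_nonneg_nonneg simp: less_imp_le)
    qed
  next
    assume h: "(A1 \<ge> a / real N * A2 \<and> x1 > 1 \<and> fP4 x1 = A1 - a / real N * A2 \<and> Emax \<ge> U)
        \<or> A1 < a / real N * A2"
    define w where "w = 1 + A2 * Emax / real N"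
    have w1: "w > 1" using A2pos E Npos by (simp add: w_def)
    have fw: "A1 \<le> fP4 w + a / real N * A2"
      using h
    proof
      assume hh: "A1 \<ge> a / real N * A2 \<and> x1 > 1 \<and> fP4 x1 = A1 - a / real N * A2 \<and> Emax \<ge> U"
      hence "x1 - 1 \<le> A2 * Emax / real N" using A2pos Npos by (simp add: U_def field_simps)
      hence "x1 \<le> w" by (simp add: w_def)
      hence "fP4 x1 \<le> fP4 w" using hh by (intro f_mono) auto
      thus ?thesis using hh by simp
    next
      assume "A1 < a / real N * A2"
      thus ?thesis using f_nonneg[of w] w1 by simp
    qed
    define mu where "mu = A2 / (real N * w)"
    have mu: "mu \<ge> 0" using A2pos Npos w1 by (simp add: mu_def)
    have sumt: "(\<Sum>j=1..N. theta j / A2) = 1"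
    proof -
      have "(\<Sum>j=1..N. theta j / A2) = (\<Sum>j=1..N. theta j) / A2" by (simp add: sum_divide_distrib)
      thus ?thesis unfolding st using A2pos by simp
    qed
    show "P4_optimal M N gamma theta a Emax 0 (\<lambda>i. 0) (\<lambda>j. theta j / A2) (Emax / real N)"
    proof (rule kkt[where x=w and mu=mu], unfold sg st)
      show "\<forall>i\<in>{1..M}. gamma i > 0" by fact
      show "\<forall>j\<in>{1..N}. theta j > 0" by fact
      show "w > 0" using w1 by simp
      show "mu \<ge> 0" by fact
      have e2: "real N * mu = A2 / w" using w1 Npos by (simp add: mu_def)
      show "A1 / w \<le> fP4 w / w + a * mu"
      proof -
        have "A1 / w \<le> (fP4 w + a / real N * A2) / w" using fw w1 by (intro divide_right_mono) auto
        thus ?thesis using w1 Npos by (simp add: mu_def add_divide_distrib)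
      qed
      show "A2 / w \<le> real N * mu" using e2 by simp
      show "(fP4 w / w + a * mu - A1 / w) * 0 = 0" by simp
      show "(real N * mu - A2 / w) * (Emax / real N) = 0" using e2 by simp
      show "0 + (\<Sum>i=1..M. 0) + (\<Sum>j=1..N. theta j / A2) = 1" using sumt by simp
      show "a * 0 + real N * (Emax / real N) = Emax" using Npos by simp
      show "\<forall>i\<in>{1..M}. gamma i * 0 = (w - 1) * 0" by simp
      show "\<forall>j\<in>{1..N}. theta j * (Emax / real N) = (w - 1) * (theta j / A2)"
        using A2pos Npos by (simp add: w_def)
      show "P4_feasible M N a Emax 0 (\<lambda>i. 0) (\<lambda>j. theta j / A2) (Emax / real N)"
        unfolding P4_feasible_def using tpos A2pos Npos E sumt by (auto simp: less_imp_le)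
    qed
  qed
qed

end
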